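(* If $x\in\mathrm{Sort}_n(132,321)$, then $x$ avoids the pattern $123$.
   Context: A permutation contains a pattern $p$ if it has a subsequence order-isomorphic to $p$; otherwise it avoids $p$. For a set $T$ of patterns, the map $s_T$ is defined as follows: the entries of the input permutation are read from left to right, with an initially empty stack. At each step, if the input is nonempty and pushing the next input entry onto the stack produces a stack whose contents, read from top to bottom, avoid every pattern in $T$, that entry is pushed; otherwise the top entry of the stack is popped and appended to the output. When the input is exhausted, the remaining stack entries are popped one at a time to the output. Write $s_{\sigma,\tau}=s_{\{\sigma,\tau\}}$ and $s=s_{\{21\}}$ (West's stack-sorting map). $\mathrm{Sort}_n(\sigma,\tau)$ is the set of $x\in S_n$ with $s(s_{\sigma,\tau}(x))=12\cdots n$. *)

theory Defs
  imports Main
begin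

definition perms :: "nat \<Rightarrow> nat list set" where
  "perms n = {x. distinct x \<and> set x = {1..n}}"

definition order_iso :: "nat list \<Rightarrow> nat list \<Rightarrow> bool" where
  "order_iso xs ys \<longleftrightarrow> length xs = length ys \<and>
     (\<forall>i<length xs. \<forall>j<length xs. (xs ! i < xs ! j) = (ys ! i < ys ! j))"

definition contains :: "nat list \<Rightarrow> nat list \<Rightarrow> bool" where
  "contains x p \<longleftrightarrow> (\<exists>I. order_iso (nths x I) p)"

definition avoids :: "nat list \<Rightarrow> nat list \<Rightarrow> bool" where
  "avoids x p \<longleftrightarrow> \<not> contains x p"

definition avoids_all :: "nat list set \<Rightarrow> nat list \<Rightarrow> bool" where
  "avoids_all T x \<longleftrightarrow> (\<forall>p\<in>T. avoids x p)"

text \<open>Stack machine: input, stack (head = top); returns the output word.  The branch for an empty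
  stack with a forbidden push cannot occur when all patterns have length at least 2.\<close>
fun stack_run :: "nat list set \<Rightarrow> nat list \<Rightarrow> nat list \<Rightarrow> nat list" where
  "stack_run T [] st = st"
| "stack_run T (a # inp) st =
     (if avoids_all T (a # st) then stack_run T inp (a # st)
      else (case st of [] \<Rightarrow> stack_run T inp [a]
                     | b # st' \<Rightarrow> b # stack_run T (a # inp) st'))"

definition s_map :: "nat list set \<Rightarrow> nat list \<Rightarrow> nat list" where
  "s_map T x = stack_run T x []"

definition west_s :: "nat list \<Rightarrow> nat list" where
  "west_s x = s_map {[2,1]} x"

definition Sort2 :: "nat \<Rightarrow> nat list \<Rightarrow> nat list \<Rightarrow> nat list set" where
  "Sort2 n \<sigma> \<tau> = {x \<in> perms n. west_s (s_map {\<sigma>, \<tau>} x) = [1..<n+1]}"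

end

theory Submission
  imports Defs "HOL-Library.Sublist"
begin

lemma contains_subseq: "contains x p \<longleftrightarrow> (\<exists>q. subseq q x \<and> order_iso q p)"
  unfolding contains_def subseq_conv_nths by auto

lemma iso3: "order_iso [x,y,z] [p,q,r] \<longleftrightarrow>
   ((x<y) = (p<q) \<and> (y<x) = (q<p) \<and> (x<z) = (p<r) \<and> (z<x) = (r<p) \<and> (y<z) = (q<r) \<and> (z<y) = (r<q))"
  unfolding order_iso_def by (auto simp: less_Suc_eq nth_Cons' numeral_3_eq_3)

lemma iso_len3: "order_iso q [p1,p2,p3] \<Longrightarrow> \<exists>x y z. q = [x,y,z]"
  unfolding order_iso_def
  by (cases q; simp; rename_tac l; case_tac l; simp; rename_tac l2; case_tac l2; simp)

lemma subseq_contains: "subseq q s \<Longrightarrow> order_iso q p \<Longrightarrow> \<not> avoids s p"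
  unfolding avoids_def contains_subseq by blast

lemma avoids_single: "length p \<ge> 2 \<Longrightarrow> avoids [d] p"
  unfolding avoids_def contains_subseq order_iso_def
  using list_emb_length by fastforce

lemma avoids_Cons: "avoids (t#s) p \<Longrightarrow> avoids s p"
  unfolding avoids_def contains_subseq by (meson subseq_Cons2_iff list_emb_Cons subseq_order.order_trans)

lemma set_run: "set (stack_run T inp st) = set inp \<union> set st"
  by (induction T inp st rule: stack_run.induct) (auto split: list.splits)

lemma sub_run: "subseq st (stack_run T inp st)"
proof (induction T inp st rule: stack_run.induct)
  case (1 T st)
  then show ?case by simp
next
  case (2 T a inp st)
  show ?case
  proof (cases "avoids_all T (a#st)")
    case True
    then have "subseq (a#st) (stack_run T inp (a#st))" using 2(1) by blast
    then show ?thesis using True by (simp add: subseq_Cons')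
  next
    case False
    show ?thesis
    proof (cases st)
      case Nil
      then show ?thesis by simp
    next
      case (Cons b st')
      then have "subseq st' (stack_run T (a#inp) st')" using 2(3) False by blast
      then show ?thesis using False Cons by simp
    qed
  qed
qed

lemma sub_cons_eq: "R = t # R' \<Longrightarrow> subseq L R' \<Longrightarrow> subseq L R"
  by (simp add: list_emb_Cons)

lemma avoidsT0: "avoids_all {[1,3,2],[3,2,1]} s \<longleftrightarrow> avoids s [1,3,2] \<and> avoids s [3,2,1]"
  unfolding avoids_all_def by auto

lemma K:
  assumes "distinct (t#s)" "avoids_all {[1,3,2],[3,2,1]} (t#s)"
    "\<not> avoids_all {[1,3,2],[3,2,1]} (d#t#s)"
  shows "\<exists>z\<in>set s. z < t"
proof -
  obtain p where p: "p \<in> {[1,3,2],[3,2,1]}" "contains (d#t#s) p"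
    using assms(3) unfolding avoids_all_def avoids_def by blast
  then obtain q where q: "subseq q (d#t#s)" "order_iso q p" unfolding contains_subseq by blast
  obtain x y z where xyz: "q = [x,y,z]" using q(2) p(1) iso_len3 by blast
  have av: "\<not> order_iso q' p" if "subseq q' (t#s)" for q'
    using assms(2) p(1) that subseq_contains unfolding avoids_all_def by blast
  have "\<not> subseq [x,y,z] (t#s)" using av q(2) xyz by blast
  then have s1: "subseq [y,z] (t#s)" using q(1) xyz by (auto split: if_splits)
  have zy: "z < y" using q(2) xyz p(1) by (auto simp: iso3)
  show ?thesis
  proof (cases "y = t")
    case True
    then show ?thesis using s1 zy by (auto simp: subseq_singleton_left)
  next
    case False
    then have s2: "subseq [y,z] s" using s1 by simp
    then have zs: "z \<in> set s" using subseq_Cons' subseq_singleton_left by metis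
    then have "z \<noteq> t" using assms(1) by auto
    have "subseq [t,y,z] (t#s)" using s2 by simp
    then have "\<not> order_iso [t,y,z] [1,3,2]" "\<not> order_iso [t,y,z] [3,2,1]"
      using assms(2) subseq_contains unfolding avoids_all_def by blast+
    then have "z < t" using zy \<open>z \<noteq> t\<close> by (auto simp: iso3)
    then show ?thesis using zs by blast
  qed
qed

lemma S3:
  "T = {[1,3,2],[3,2,1]} \<Longrightarrow> a \<in> set st \<Longrightarrow> c \<in> set inp \<Longrightarrow> a < c \<Longrightarrow>
   distinct (inp @ st) \<Longrightarrow> avoids_all T st \<Longrightarrow>
   \<exists>a'\<le>a. subseq [c,a'] (stack_run T inp st)"
proof (induction T inp st arbitrary: a rule: stack_run.induct)
  case (1 T st)
  then show ?case by simp
next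
  case (2 T d inp st)
  show ?case
  proof (cases "avoids_all T (d#st)")
    case True
    show ?thesis
    proof (cases "d = c")
      case True
      have "subseq [c,a] (c#st)" using 2(5) by (simp add: subseq_singleton_left)
      then have "subseq [c,a] (stack_run T inp (c#st))"
        using sub_run subseq_order.order_trans by blast
      then show ?thesis using True \<open>avoids_all T (d#st)\<close> by auto
    next
      case False
      then have "c \<in> set inp" using 2(6) by simp
      moreover have "distinct (inp @ d # st)" using 2(8) by auto
      ultimately obtain a' where "a' \<le> a" "subseq [c,a'] (stack_run T inp (d#st))"
        using 2(1)[OF True 2(4) _ _ 2(7)] 2(5) True by auto
      then show ?thesis using True by auto
    qed
  next
    case False
    show ?thesis
    proof (cases st)
      case Nil
      then show ?thesis using 2(5) by simp
    next
      case (Cons t st')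
      have dist: "distinct ((d#inp) @ st')" using 2(8) Cons by auto
      have av: "avoids_all T st'" using 2(9) Cons avoids_Cons unfolding avoids_all_def by blast
      obtain a0 where a0: "a0 \<in> set st'" "a0 \<le> a"
      proof (cases "a \<in> set st'")
        case True
        then show ?thesis using that by blast
      next
        case False
        then have "a = t" using 2(5) Cons by auto
        moreover have "distinct (t#st')" using 2(8) Cons by auto
        ultimately obtain z where "z \<in> set st'" "z < a"
          using K[of t st' d] 2(4) 2(9) False \<open>\<not> avoids_all T (d#st)\<close> Cons by blast
        then show ?thesis using that by auto
      qed
      obtain a' where "a' \<le> a0" "subseq [c,a'] (stack_run T (d#inp) st')"
        using 2(3)[OF False Cons 2(4) a0(1) 2(6) _ dist av] a0 2(7) by auto
      moreover have "stack_run T (d#inp) st = t # stack_run T (d#inp) st'" using False Cons by simp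
      ultimately show ?thesis using a0 by (metis list_emb_Cons order_trans)
    qed
  qed
qed

lemma S2:
  "T = {[1,3,2],[3,2,1]} \<Longrightarrow> subseq [b,a] st \<Longrightarrow> a < b \<Longrightarrow> c \<in> set inp \<Longrightarrow> b < c \<Longrightarrow>
   distinct (inp @ st) \<Longrightarrow> avoids_all T st \<Longrightarrow>
   \<exists>a'<b. subseq [b,c,a'] (stack_run T inp st)"
proof (induction T inp st rule: stack_run.induct)
  case (1 T st)
  then show ?case by simp
next
  case (2 T d inp st)
  show ?case
  proof (cases "avoids_all T (d#st)")
    case True
    show ?thesis
    proof (cases "d = c")
      case True
      have "subseq [c,b,a] (c#st)" using 2(5) by simp
      moreover have "order_iso [c,b,a] [3,2,1]" using 2(6) 2(8) by (auto simp: iso3)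
      ultimately have "\<not> avoids_all T (d#st)" using True 2(4) subseq_contains
        unfolding avoids_all_def by blast
      then show ?thesis using \<open>avoids_all T (d#st)\<close> by blast
    next
      case False
      then have "c \<in> set inp" using 2(7) by simp
      moreover have "distinct (inp @ d # st)" using 2(9) by auto
      moreover have "subseq [b,a] (d#st)" using 2(5) by (rule list_emb_Cons)
      ultimately obtain a' where "a' < b" "subseq [b,c,a'] (stack_run T inp (d#st))"
        using 2(1)[OF True 2(4) _ 2(6) _ 2(8) _ True] by blast
      then show ?thesis using True by auto
    qed
  next
    case False
    show ?thesis
    proof (cases st)
      case Nil
      then show ?thesis using 2(5) by simp
    next
      case (Cons t st')
      have dist: "distinct ((d#inp) @ st')" using 2(9) Cons by auto
      have av: "avoids_all T st'" using 2(10) Cons avoids_Cons unfolding avoids_all_def by blast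
      have eq: "stack_run T (d#inp) st = t # stack_run T (d#inp) st'" using False Cons by simp
      show ?thesis
      proof (cases "subseq [b,a] st'")
        case True
        obtain a' where "a' < b" "subseq [b,c,a'] (stack_run T (d#inp) st')"
          using 2(3)[OF False Cons 2(4) True 2(6) 2(7) 2(8) dist av] by blast
        then show ?thesis using sub_cons_eq[OF eq] by blast
      next
        case False
        then have "t = b" "a \<in> set st'" using 2(5) Cons by (auto split: if_splits simp: subseq_singleton_left)
        obtain a' where "a' \<le> a" "subseq [c,a'] (stack_run T (d#inp) st')"
          using S3[OF 2(4) \<open>a \<in> set st'\<close> 2(7) _ dist av] 2(6) 2(8) by auto
        then have "subseq [b,c,a'] (t # stack_run T (d#inp) st')" using \<open>t = b\<close> by simp
        moreover have "a' < b" using \<open>a' \<le> a\<close> 2(6) by simp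
        ultimately show ?thesis using eq by (simp only:) blast
      qed
    qed
  qed
qed

lemma S1:
  "T = {[1,3,2],[3,2,1]} \<Longrightarrow> a \<in> set st \<Longrightarrow> subseq [b,c] inp \<Longrightarrow> a < b \<Longrightarrow> b < c \<Longrightarrow>
   distinct (inp @ st) \<Longrightarrow> avoids_all T st \<Longrightarrow>
   \<exists>u v w. w < u \<and> u < v \<and> subseq [u,v,w] (stack_run T inp st)"
proof (induction T inp st arbitrary: a rule: stack_run.induct)
  case (1 T st)
  then show ?case by simp
next
  case (2 T d inp st)
  show ?case
  proof (cases "avoids_all T (d#st)")
    case True
    show ?thesis
    proof (cases "d = b")
      case True
      have "c \<in> set inp" using 2(6) True by (auto split: if_splits simp: subseq_singleton_left dest: subseq_Cons')
      moreover have "subseq [b,a] (b#st)" using 2(5) by (simp add: subseq_singleton_left)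
      moreover have "distinct (inp @ b # st)" using 2(9) True by auto
      ultimately obtain a' where "a' < b" "subseq [b,c,a'] (stack_run T inp (b#st))"
        using S2[OF 2(4) _ 2(7) _ 2(8) _ ] \<open>avoids_all T (d#st)\<close> True by blast
      then show ?thesis using \<open>avoids_all T (d#st)\<close> True 2(8) by auto
    next
      case False
      then have "subseq [b,c] inp" using 2(6) by simp
      moreover have "distinct (inp @ d # st)" using 2(9) by auto
      ultimately obtain u v w where "w < u \<and> u < v \<and> subseq [u,v,w] (stack_run T inp (d#st))"
        using 2(1)[OF True 2(4) _ _ 2(7) 2(8) _ True] 2(5) by fastforce
      then show ?thesis using True by auto
    qed
  next
    case False
    show ?thesis
    proof (cases st)
      case Nil
      then show ?thesis using 2(5) by simp
    next
      case (Cons t st')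
      have dist: "distinct ((d#inp) @ st')" using 2(9) Cons by auto
      have av: "avoids_all T st'" using 2(10) Cons avoids_Cons unfolding avoids_all_def by blast
      obtain a0 where a0: "a0 \<in> set st'" "a0 \<le> a"
      proof (cases "a \<in> set st'")
        case True
        then show ?thesis using that by blast
      next
        case False
        then have "a = t" using 2(5) Cons by auto
        moreover have "distinct (t#st')" using 2(9) Cons by auto
        ultimately obtain z where "z \<in> set st'" "z < a"
          using K[of t st' d] 2(4) 2(10) False \<open>\<not> avoids_all T (d#st)\<close> Cons by blast
        then show ?thesis using that by auto
      qed
      obtain u v w where "w < u \<and> u < v \<and> subseq [u,v,w] (stack_run T (d#inp) st')"
        using 2(3)[OF False Cons 2(4) a0(1) 2(6) _ 2(8) dist av] a0 2(7) by fastforce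
      moreover have eq: "stack_run T (d#inp) st = t # stack_run T (d#inp) st'" using False Cons by simp
      ultimately show ?thesis using sub_cons_eq[OF eq] by blast
    qed
  qed
qed

lemma S0:
  "T = {[1,3,2],[3,2,1]} \<Longrightarrow> subseq [a,b,c] inp \<Longrightarrow> a < b \<Longrightarrow> b < c \<Longrightarrow>
   distinct (inp @ st) \<Longrightarrow> avoids_all T st \<Longrightarrow>
   \<exists>u v w. w < u \<and> u < v \<and> subseq [u,v,w] (stack_run T inp st)"
proof (induction T inp st rule: stack_run.induct)
  case (1 T st)
  then show ?case by simp
next
  case (2 T d inp st)
  show ?case
  proof (cases "avoids_all T (d#st)")
    case True
    show ?thesis
    proof (cases "d = a")
      case True
      have "subseq [b,c] inp" using 2(5) True by simp
      moreover have "distinct (inp @ d # st)" using 2(8) by auto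
      ultimately obtain u v w where "w < u \<and> u < v \<and> subseq [u,v,w] (stack_run T inp (d#st))"
        using S1[OF 2(4) _ _ 2(6) 2(7) _ \<open>avoids_all T (d#st)\<close>] True by fastforce
      then show ?thesis using \<open>avoids_all T (d#st)\<close> by auto
    next
      case False
      then have "subseq [a,b,c] inp" using 2(5) by simp
      moreover have "distinct (inp @ d # st)" using 2(8) by auto
      ultimately obtain u v w where "w < u \<and> u < v \<and> subseq [u,v,w] (stack_run T inp (d#st))"
        using 2(1)[OF True 2(4) _ 2(6) 2(7) _ True] by fastforce
      then show ?thesis using True by auto
    qed
  next
    case False
    show ?thesis
    proof (cases st)
      case Nil
      have "avoids_all T [d]" using 2(4) avoids_single unfolding avoids_all_def by auto
      then show ?thesis using False Nil by simp
    next
      case (Cons t st')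
      have dist: "distinct ((d#inp) @ st')" using 2(8) Cons by auto
      have av: "avoids_all T st'" using 2(9) Cons avoids_Cons unfolding avoids_all_def by blast
      obtain u v w where "w < u \<and> u < v \<and> subseq [u,v,w] (stack_run T (d#inp) st')"
        using 2(3)[OF False Cons 2(4) 2(5) 2(6) 2(7) dist av] by fastforce
      moreover have eq: "stack_run T (d#inp) st = t # stack_run T (d#inp) st'" using False Cons by simp
      ultimately show ?thesis using sub_cons_eq[OF eq] by blast
    qed
  qed
qed

lemma iso21: "a < b \<Longrightarrow> order_iso [b,a] [2,1]"
  unfolding order_iso_def by (auto simp: less_Suc_eq nth_Cons' numeral_2_eq_2)

lemma W1:
  "T = {[2,1]} \<Longrightarrow> u \<in> set st \<Longrightarrow> subseq [v,w] inp \<Longrightarrow> u < v \<Longrightarrow>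
   subseq [u,w] (stack_run T inp st)"
proof (induction T inp st rule: stack_run.induct)
  case (1 T st)
  then show ?case by simp
next
  case (2 T d inp st)
  show ?case
  proof (cases "avoids_all T (d#st)")
    case True
    show ?thesis
    proof (cases "d = v")
      case True
      have "subseq [v,u] (v#st)" using 2(5) by (simp add: subseq_singleton_left)
      then have "\<not> avoids_all T (d#st)" using True 2(4) 2(7) subseq_contains iso21
        unfolding avoids_all_def by blast
      then show ?thesis using \<open>avoids_all T (d#st)\<close> by blast
    next
      case False
      then have "subseq [v,w] inp" using 2(6) by simp
      then show ?thesis using 2(1)[OF True 2(4) _ _ 2(7)] 2(5) True by auto
    qed
  next
    case False
    show ?thesis
    proof (cases st)
      case Nil
      then show ?thesis using 2(5) by simp
    next
      case (Cons t st')
      have eq: "stack_run T (d#inp) st = t # stack_run T (d#inp) st'" using False Cons by simp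
      show ?thesis
      proof (cases "t = u")
        case True
        have "w \<in> set (d#inp)" using 2(6) by (metis subseq_Cons' subseq_singleton_left)
        then have "w \<in> set (stack_run T (d#inp) st')" unfolding set_run by (rule UnI1)
        then show ?thesis using eq True by (simp add: subseq_singleton_left)
      next
        case False
        then have "u \<in> set st'" using 2(5) Cons by auto
        then show ?thesis using 2(3)[OF \<open>\<not> avoids_all T (d#st)\<close> Cons 2(4) _ 2(6) 2(7)] sub_cons_eq[OF eq]
          by blast
      qed
    qed
  qed
qed

lemma W0:
  "T = {[2,1]} \<Longrightarrow> subseq [u,v,w] inp \<Longrightarrow> u < v \<Longrightarrow>
   subseq [u,w] (stack_run T inp st)"
proof (induction T inp st rule: stack_run.induct)
  case (1 T st)
  then show ?case by simp
next
  case (2 T d inp st)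
  show ?case
  proof (cases "avoids_all T (d#st)")
    case True
    show ?thesis
    proof (cases "d = u")
      case True
      then have "subseq [v,w] inp" using 2(5) by simp
      then show ?thesis using W1[OF 2(4) _ _ 2(6)] True \<open>avoids_all T (d#st)\<close> by simp
    next
      case False
      then have "subseq [u,v,w] inp" using 2(5) by simp
      then show ?thesis using 2(1)[OF True 2(4) _ 2(6)] True by auto
    qed
  next
    case False
    show ?thesis
    proof (cases st)
      case Nil
      have "avoids_all T [d]" using 2(4) avoids_single unfolding avoids_all_def by auto
      then show ?thesis using False Nil by simp
    next
      case (Cons t st')
      have eq: "stack_run T (d#inp) st = t # stack_run T (d#inp) st'" using False Cons by simp
      show ?thesis using 2(3)[OF False Cons 2(4) 2(5) 2(6)] sub_cons_eq[OF eq] by blast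
    qed
  qed
qed

lemma sorted_sub2: "sorted_wrt (<) ys \<Longrightarrow> subseq [u,w] ys \<Longrightarrow> (u::nat) < w"
  by (induction ys) (auto split: if_splits simp: subseq_singleton_left)

theorem proposition3p2:
  fixes n :: nat and x :: "nat list"
  assumes "x \<in> Sort2 n [1,3,2] [3,2,1]"
  shows "avoids x [1,2,3]"
proof (rule ccontr)
  assume "\<not> avoids x [1,2,3]"
  then obtain q where q: "subseq q x" "order_iso q [1,2,3]"
    unfolding avoids_def contains_subseq by blast
  then obtain a b c where abc: "q = [a,b,c]" using iso_len3 by blast
  have lt: "a < b" "b < c" using q(2) abc by (auto simp: iso3)
  have dx: "distinct x" using assms unfolding Sort2_def perms_def by auto
  have avn: "avoids_all {[1,3,2],[3,2,1]} []"
    unfolding avoids_all_def avoids_def contains_subseq order_iso_def by auto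
  obtain u v w where uvw: "w < u" "u < v" "subseq [u,v,w] (s_map {[1,3,2],[3,2,1]} x)"
    using S0[OF refl _ lt(1) lt(2) _ avn, of x] q(1) abc dx unfolding s_map_def by auto
  have "subseq [u,w] (west_s (s_map {[1,3,2],[3,2,1]} x))"
    unfolding west_s_def s_map_def using W0[OF refl uvw(3) uvw(2)] by (simp add: s_map_def)
  moreover have "west_s (s_map {[1,3,2],[3,2,1]} x) = [1..<n+1]"
    using assms unfolding Sort2_def by auto
  ultimately have sub: "subseq [u,w] [1..<n+1]" by (simp only:)
  have "sorted_wrt (<) [1..<n+1]" by (rule sorted_wrt_upt)
  then have "u < w" using sorted_sub2 sub by blast
  then show False using uvw(1) by simp
qed

end
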